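(* Consider a time series with baseline variables $X$ whose index sets satisfy $\{N,M,C\}\subseteq V$ (outcome process $N$, mediator process $M$, covariate process $C$; $V$ may contain further, e.g. unobserved, processes) and $\{A^D,A^M\}\subseteq W$ (treatment components, baseline). Suppose that for every $t\ge 1$ there is a DAG $D_t$ on the node set $V^t\cup W^t$ such that the $d$-separation Markov property holds in $D_t$ for the distribution of $X$ (the interventional distribution under $do(A^D=a,A^M=a^* )$), and such that the only contemporaneous edges of $D_t$ are of the form $\nu_s^N\to\nu_s^M$ and $\nu_s^N\to\nu_s^C$. Let $D$ be the tailed directed graph on $V\cup W$ containing $i\to j$ (resp. $i\bullet\!\!\to j$) if and only if this edge is in the rolled version of $D_t$ for some $t$. Then, for every lag $k\ge 1$: (i) if $M$ is $\delta$-separated from $A^D$ given $\{A^M,C,N\}$ in $D$, then $A^D$ and $X_k^M$ are conditionally independent given $(A^M,\overline X^M_{k-1},\overline X^C_{k-1},\overline X^N_k)$; (ii) if $C$ is $\delta$-separated from $A^M$ given $\{A^D,M,N\}$ in $D$, then $A^M$ and $X_k^C$ are conditionally independent given $(A^D,\overline X^M_{k},\overline X^C_{k-1},\overline X^N_k)$; (iii) if $N$ is $\delta$-separated from $A^M$ given $\{A^D,C,M\}$ in $D$, then $A^M$ and $X_k^N$ are conditionally independent given $(A^D,\overline X^M_{k-1},\overline X^C_{k-1},\overline X^N_{k-1})$.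
   Context: Time series with baseline variables: $V$, $W$ finite disjoint index sets; $X_0$ is a random vector indexed by $V\cup W$, $X_t$ ($t\ge1$) indexed by $V$. $X_t^A$ is the subvector indexed by $A$, $\overline X_t^A=\{X_s^i:i\in A,s\le t\}$; baseline variables are written simply as $A^D$, $A^M$. In the survival application $X_k^N$ is the indicator of $T>t_k$, and $X^M_k,X^C_k$ are mediator and covariate measurements at time $t_k$. Unrolled node set: $V^t=\bigcup_{i\in V}\{\nu_0^i,\dots,\nu_t^i\}$, $W^t=\{\nu_0^i:i\in W\}$; node $\nu_s^i$ represents $X_s^i$. An edge $\nu_s^i\to\nu_u^j$ is contemporaneous if $s=u$. The $d$-separation Markov property holds in $D_t$ if $d$-separation of node sets $a,b$ by $c$ implies conditional independence of the corresponding variables given those of $c$. Rolled version of a DAG $D_t$: the tailed directed graph with $i\ast\!\!\to j$ if $\nu_s^i\to\nu_u^j$ for some $s\le u$ and $i\bullet\!\!\to j$ iff $\nu_u^i\to\nu_u^j$ for some $u$ (here $i\ast\!\!\to j$ means $i\to j$ or $i\bullet\!\!\to j$, and $i\to j$ is omitted when $i\bullet\!\!\to j$ is present). Standing assumption: whenever $\nu_u^i\to\nu_u^j$ is present, so is $\nu_s^i\to\nu_r^j$ for some $s<r$. $\delta$-separation: for a tailed directed graph $D$ let $D^-$ be the DG with $i\to j$ iff $i\ast\!\!\to j$ in $D$, and $(D^-)^B$ the DG obtained by deleting all edges $i\to j$ with $i\in B$. $B$ is $\delta$-separated from $A$ given $C$ in $D$ if every path (walk without repeated nodes) in $(D^-)^B$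 between $A$ and $B$ contains a noncollider in $C$ or a collider (non-endpoint node with both adjacent edges pointing into it) not in $\mathrm{an}(C)\cup C$, ancestors taken in $D^-$. *)

theory Defs
  imports "HOL-Probability.Probability"
begin

text \<open>Nodes of the unrolled graph: (i, s) stands for the node nu_s^i, i.e. the variable X_s^i.\<close>

definition is_path :: "('v \<times> 'v) set \<Rightarrow> 'v list \<Rightarrow> bool list \<Rightarrow> bool" where
  "is_path E ps ds \<longleftrightarrow> ps \<noteq> [] \<and> distinct ps \<and> length ds = length ps - 1 \<and>
     (\<forall>k < length ds. (if ds ! k then (ps ! k, ps ! Suc k) \<in> E else (ps ! Suc k, ps ! k) \<in> E))"

definition collider_at :: "bool list \<Rightarrow> nat \<Rightarrow> bool" where
  "collider_at ds k \<longleftrightarrow> ds ! (k - 1) \<and> \<not> ds ! k"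

definition ancestors :: "('v \<times> 'v) set \<Rightarrow> 'v set \<Rightarrow> 'v set" where
  "ancestors E C = {x. \<exists>y\<in>C. (x, y) \<in> E\<^sup>*}"   \<comment> \<open>contains C, i.e. this is an(C) \<union> C\<close>

definition separated :: "('v \<times> 'v) set \<Rightarrow> ('v \<times> 'v) set \<Rightarrow> 'v set \<Rightarrow> 'v set \<Rightarrow> 'v set \<Rightarrow> bool" where
  "separated Ep Ea A B C \<longleftrightarrow>
     (\<forall>ps ds. is_path Ep ps ds \<and> (hd ps \<in> A \<and> last ps \<in> B \<or> hd ps \<in> B \<and> last ps \<in> A) \<longrightarrow>
        (\<exists>k. 0 < k \<and> k < length ps - 1 \<and>
           ((\<not> collider_at ds k \<and> ps ! k \<in> C) \<or> (collider_at ds k \<and> ps ! k \<notin> ancestors Ea C))))"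

definition d_separated :: "('v \<times> 'v) set \<Rightarrow> 'v set \<Rightarrow> 'v set \<Rightarrow> 'v set \<Rightarrow> bool" where
  "d_separated E A B C \<longleftrightarrow> separated E E A B C"

definition is_dag_on :: "'v set \<Rightarrow> ('v \<times> 'v) set \<Rightarrow> bool" where
  "is_dag_on Nd E \<longleftrightarrow> E \<subseteq> Nd \<times> Nd \<and> acyclic E"

definition unrolled_nodes :: "'i set \<Rightarrow> 'i set \<Rightarrow> nat \<Rightarrow> ('i \<times> nat) set" where
  "unrolled_nodes V W t = {(i, s). i \<in> V \<and> s \<le> t} \<union> {(i, 0) | i. i \<in> W}"

text \<open>Rolled version of an unrolled DAG: a tailed directed graph, represented by its set of
  plain edges i -> j and its set of tailed edges i \<bullet>-> j.\<close>
definition rolled_tailed :: "(('i \<times> nat) \<times> ('i \<times> nat)) set \<Rightarrow> ('i \<times> 'i) set" where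
  "rolled_tailed E = {(i, j). \<exists>u. ((i, u), (j, u)) \<in> E}"

definition rolled_plain :: "(('i \<times> nat) \<times> ('i \<times> nat)) set \<Rightarrow> ('i \<times> 'i) set" where
  "rolled_plain E = {(i, j). \<exists>s u. s \<le> u \<and> ((i, s), (j, u)) \<in> E} - rolled_tailed E"

definition minus_graph :: "('i \<times> 'i) set \<Rightarrow> ('i \<times> 'i) set \<Rightarrow> ('i \<times> 'i) set" where
  "minus_graph P T = P \<union> T"

definition delta_separated :: "('i \<times> 'i) set \<Rightarrow> ('i \<times> 'i) set \<Rightarrow> 'i set \<Rightarrow> 'i set \<Rightarrow> 'i set \<Rightarrow> bool" where
  "delta_separated P T B A C \<longleftrightarrow>
     separated {e \<in> minus_graph P T. fst e \<notin> B} (minus_graph P T) A B C"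

definition gen_sigma :: "'a measure \<Rightarrow> ('n \<Rightarrow> 'a \<Rightarrow> 'b) \<Rightarrow> ('n \<Rightarrow> 'b measure) \<Rightarrow> 'n set \<Rightarrow> 'a measure" where
  "gen_sigma Pr X Sp S = sigma (space Pr) (\<Union>n\<in>S. {X n -` B \<inter> space Pr | B. B \<in> sets (Sp n)})"

definition cond_indep :: "'a measure \<Rightarrow> ('n \<Rightarrow> 'a \<Rightarrow> 'b) \<Rightarrow> ('n \<Rightarrow> 'b measure) \<Rightarrow> 'n set \<Rightarrow> 'n set \<Rightarrow> 'n set \<Rightarrow> bool" where
  "cond_indep Pr X Sp A B C \<longleftrightarrow>
     (\<forall>EA \<in> sets (gen_sigma Pr X Sp A). \<forall>EB \<in> sets (gen_sigma Pr X Sp B).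
        AE x in Pr. real_cond_exp Pr (gen_sigma Pr X Sp C) (indicator (EA \<inter> EB)) x =
          real_cond_exp Pr (gen_sigma Pr X Sp C) (indicator EA) x *
          real_cond_exp Pr (gen_sigma Pr X Sp C) (indicator EB) x)"

end

theory Submission
  imports Defs
begin


definition edge_at :: "'v list \<Rightarrow> bool list \<Rightarrow> nat \<Rightarrow> 'v \<times> 'v" where
  "edge_at ps ds k = (if ds ! k then (ps ! k, ps ! Suc k) else (ps ! Suc k, ps ! k))"

definition walk :: "('v \<times> 'v) set \<Rightarrow> 'v list \<Rightarrow> bool list \<Rightarrow> bool" where
  "walk E ps ds \<longleftrightarrow> ps \<noteq> [] \<and> length ds = length ps - 1 \<and> (\<forall>k < length ds. edge_at ps ds k \<in> E)"

definition open_at :: "('v \<times> 'v) set \<Rightarrow> 'v set \<Rightarrow> 'v list \<Rightarrow> bool list \<Rightarrow> nat \<Rightarrow> bool" where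
  "open_at Ea C ps ds k \<longleftrightarrow> (collider_at ds k \<longrightarrow> ps ! k \<in> ancestors Ea C) \<and> (\<not> collider_at ds k \<longrightarrow> ps ! k \<notin> C)"

definition conn :: "('v \<times> 'v) set \<Rightarrow> ('v \<times> 'v) set \<Rightarrow> 'v set \<Rightarrow> 'v list \<Rightarrow> bool list \<Rightarrow> bool" where
  "conn Ep Ea C ps ds \<longleftrightarrow> walk Ep ps ds \<and> (\<forall>k. 0 < k \<and> k < length ps - 1 \<longrightarrow> open_at Ea C ps ds k)"

lemma is_path_walk: "is_path E ps ds \<longleftrightarrow> walk E ps ds \<and> distinct ps"
  unfolding is_path_def walk_def edge_at_def by auto

lemma separated_conn:
  "separated Ep Ea A B C \<longleftrightarrow> \<not> (\<exists>ps ds. conn Ep Ea C ps ds \<and> distinct ps \<and>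
      (hd ps \<in> A \<and> last ps \<in> B \<or> hd ps \<in> B \<and> last ps \<in> A))"
  unfolding separated_def conn_def is_path_walk open_at_def by blast

lemma fwd_chain:
  assumes "walk E ps ds" "b < length ps" "\<forall>q. a \<le> q \<and> q < b \<longrightarrow> ds ! q" "a \<le> b"
  shows "(ps ! a, ps ! b) \<in> E\<^sup>*"
  using assms(2-4)
proof (induction b)
  case 0 then show ?case by simp
next
  case (Suc b)
  show ?case
  proof (cases "a = Suc b")
    case True then show ?thesis by simp
  next
    case False
    then have ab: "a \<le> b" using Suc by simp
    have "(ps ! a, ps ! b) \<in> E\<^sup>*" using Suc ab by auto
    moreover have "ds ! b" using Suc ab by auto
    moreover have "b < length ds" using assms(1) Suc unfolding walk_def by auto
    ultimately have "(ps ! b, ps ! Suc b) \<in> E" using assms(1) unfolding walk_def edge_at_def by auto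
    with \<open>(ps ! a, ps ! b) \<in> E\<^sup>*\<close> show ?thesis by simp
  qed
qed



lemma anc_step:
  assumes "(x, y) \<in> Ep\<^sup>*" "Ep \<subseteq> Ea" "y \<in> ancestors Ea C"
  shows "x \<in> ancestors Ea C"
proof -
  from assms(3) obtain z where z: "z \<in> C" "(y, z) \<in> Ea\<^sup>*" unfolding ancestors_def by auto
  have "(x, y) \<in> Ea\<^sup>*" using assms(1,2) rtrancl_mono by blast
  with z have "(x, z) \<in> Ea\<^sup>*" by (meson rtrancl_trans)
  with z show ?thesis unfolding ancestors_def by blast
qed

lemma walk_to_path:
  assumes "conn Ep Ea C ps ds" "Ep \<subseteq> Ea"
  shows "\<exists>ps' ds'. conn Ep Ea C ps' ds' \<and> distinct ps' \<and> hd ps' = hd ps \<and> last ps' = last ps"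
  using assms(1)
proof (induction "length ps" arbitrary: ps ds rule: less_induct)
  case less
  note cn = less.prems
  have w: "walk Ep ps ds" using cn unfolding conn_def by auto
  have ne: "ps \<noteq> []" and lds: "length ds = length ps - 1" using w unfolding walk_def by auto
  show ?case
  proof (cases "distinct ps")
    case True then show ?thesis using cn by blast
  next
    case False
    then obtain i j where ij: "i < j" "j < length ps" "ps ! i = ps ! j"
      by (metis distinct_conv_nth linorder_neqE_nat)
    define L where "L = length ps"
    define \<sigma> where "\<sigma> p = (if p < i then p else p - i + j)" for p
    define ps1 where "ps1 = take i ps @ drop j ps"
    define ds1 where "ds1 = take i ds @ drop j ds"
    have len1: "length ps1 = i + L - j" unfolding ps1_def L_def using ij by auto
    have lds1: "length ds1 = length ps1 - 1" unfolding ds1_def len1 using ij lds L_def by auto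
    have nth1: "ps1 ! p = ps ! (\<sigma> p)" if "p < length ps1" for p
      using that ij unfolding ps1_def \<sigma>_def len1 L_def by (auto simp: nth_append add.commute)
    have dnth1: "ds1 ! p = ds ! (\<sigma> p)" if "p < length ds1" for p
      using that ij lds unfolding ds1_def \<sigma>_def lds1 len1 L_def by (auto simp: nth_append add.commute)
    have nthS: "ps1 ! Suc p = ps ! Suc (\<sigma> p)" if "Suc p < length ps1" for p
    proof -
      have "ps1 ! Suc p = ps ! (\<sigma> (Suc p))" using nth1 that by blast
      also have "\<dots> = ps ! Suc (\<sigma> p)"
        using ij unfolding \<sigma>_def by (cases "Suc p = i") (auto simp: Suc_diff_le)
      finally show ?thesis .
    qed
    have sig_lt: "\<sigma> p < L - 1" if "p < length ps1 - 1" for p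
      using that ij unfolding \<sigma>_def len1 by auto
    have edge1: "edge_at ps1 ds1 p = edge_at ps ds (\<sigma> p)" if "p < length ds1" for p
      using that nth1 nthS dnth1 lds1 unfolding edge_at_def by auto
    have w1: "walk Ep ps1 ds1"
      unfolding walk_def
    proof (intro conjI allI impI)
      show "ps1 \<noteq> []" using len1 ij L_def by auto
      show "length ds1 = length ps1 - 1" by (rule lds1)
      fix p assume "p < length ds1"
      then show "edge_at ps1 ds1 p \<in> Ep" using edge1 w sig_lt lds1 lds L_def unfolding walk_def by auto
    qed
    have op1: "open_at Ea C ps1 ds1 p" if p: "0 < p" "p < length ps1 - 1" for p
    proof -
      have pd: "p < length ds1" "p - 1 < length ds1" using p lds1 by auto
      have cold: "collider_at ds1 p = (ds ! (\<sigma> (p - 1)) \<and> \<not> ds ! (\<sigma> p))"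
        unfolding collider_at_def using dnth1 pd by auto
      have node: "ps1 ! p = ps ! (\<sigma> p)" using nth1 p by auto
      show ?thesis
      proof (cases "p = i")
        case False
        then have s1: "\<sigma> (p - 1) = \<sigma> p - 1" and s0: "0 < \<sigma> p"
          using p ij unfolding \<sigma>_def by auto
        have "open_at Ea C ps ds (\<sigma> p)" using cn s0 sig_lt[OF p(2)] L_def unfolding conn_def by auto
        moreover have "collider_at ds1 p = collider_at ds (\<sigma> p)" using cold s1 unfolding collider_at_def by simp
        ultimately show ?thesis unfolding open_at_def node by simp
      next
        case True
        have si: "\<sigma> (p - 1) = i - 1" "\<sigma> p = j" using True p unfolding \<sigma>_def by auto
        have jL: "j < L - 1" using sig_lt[OF p(2)] si by simp
        have i0: "0 < i" using True p by simp
        have opi: "open_at Ea C ps ds i" using cn i0 ij jL L_def unfolding conn_def by auto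
        have opj: "open_at Ea C ps ds j" using cn ij i0 jL L_def unfolding conn_def by auto
        show ?thesis
        proof (cases "collider_at ds1 p")
          case False
          then have "\<not> ds ! (i - 1) \<or> ds ! j" using cold si by simp
          then show ?thesis
          proof
            assume "\<not> ds ! (i - 1)"
            then have "\<not> collider_at ds i" unfolding collider_at_def by simp
            then show ?thesis using opi False node si True ij unfolding open_at_def by simp
          next
            assume "ds ! j"
            then have "\<not> collider_at ds j" unfolding collider_at_def by simp
            then show ?thesis using opj False node si True ij unfolding open_at_def by simp
          qed
        next
          case col: True
          then have c1: "ds ! (i - 1)" "\<not> ds ! j" using cold si by auto
          have "ps ! i \<in> ancestors Ea C"
          proof (cases "ds ! i")
            case False
            then have "collider_at ds i" using c1 unfolding collider_at_def by simp
            then show ?thesis using opi unfolding open_at_def by simp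
          next
            case dsi: True
            define l where "l = (LEAST l. i < l \<and> \<not> ds ! l)"
            have ex: "i < j \<and> \<not> ds ! j" using ij c1 by simp
            have l1: "i < l" "\<not> ds ! l" using LeastI[of "\<lambda>l. i < l \<and> \<not> ds ! l", OF ex] unfolding l_def by auto
            have lj: "l \<le> j" using Least_le[of "\<lambda>l. i < l \<and> \<not> ds ! l", OF ex] unfolding l_def by simp
            have fw: "\<forall>q. i \<le> q \<and> q < l \<longrightarrow> ds ! q"
            proof (intro allI impI)
              fix q assume q: "i \<le> q \<and> q < l"
              show "ds ! q"
              proof (cases "q = i")
                case True then show ?thesis using dsi by simp
              next
                case False
                then have "i < q" using q by simp
                then show ?thesis using not_less_Least[of q "\<lambda>l. i < l \<and> \<not> ds ! l"] q unfolding l_def by blast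
              qed
            qed
            have "i \<le> l - 1" "l - 1 < l" using l1 by auto
            then have "ds ! (l - 1)" using fw by blast
            then have "collider_at ds l" using l1 unfolding collider_at_def by simp
            moreover have "0 < l" "l < length ps - 1" using l1 lj jL L_def by auto
            ultimately have "open_at Ea C ps ds l" using cn unfolding conn_def by blast
            with \<open>collider_at ds l\<close> have "ps ! l \<in> ancestors Ea C" unfolding open_at_def by blast
            moreover have "(ps ! i, ps ! l) \<in> Ep\<^sup>*"
              using fwd_chain[OF w, of l i] fw l1 lj ij by simp
            ultimately show ?thesis using anc_step[OF _ assms(2)] by blast
          qed
          then show ?thesis using col node si ij unfolding open_at_def by simp
        qed
      qed
    qed
    have c1: "conn Ep Ea C ps1 ds1" unfolding conn_def using w1 op1 by auto
    have shorter: "length ps1 < length ps" using len1 ij L_def by auto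
    have hd1: "hd ps1 = hd ps"
    proof -
      have "hd ps1 = ps1 ! 0" using w1 unfolding walk_def by (simp add: hd_conv_nth)
      also have "\<dots> = ps ! (\<sigma> 0)" using nth1 w1 unfolding walk_def by auto
      also have "\<dots> = ps ! 0" using ij unfolding \<sigma>_def by auto
      finally show ?thesis using ne by (simp add: hd_conv_nth)
    qed
    have last1: "last ps1 = last ps"
    proof -
      have "last ps1 = ps1 ! (length ps1 - 1)" using w1 unfolding walk_def by (simp add: last_conv_nth)
      also have "\<dots> = ps ! (\<sigma> (length ps1 - 1))" using nth1 w1 unfolding walk_def by auto
      also have "\<sigma> (length ps1 - 1) = L - 1" using ij(1,2) len1 unfolding \<sigma>_def L_def by simp
      finally show ?thesis using ne L_def by (simp add: last_conv_nth)
    qed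
    from less.hyps[OF shorter c1] hd1 last1 show ?thesis by metis
  qed
qed



lemma walk_rev:
  assumes "walk E ps ds"
  shows "walk E (rev ps) (map Not (rev ds))"
proof -
  have ne: "ps \<noteq> []" and l: "length ds = length ps - 1" and e: "\<forall>k<length ds. edge_at ps ds k \<in> E"
    using assms unfolding walk_def by auto
  show ?thesis unfolding walk_def
  proof (intro conjI allI impI)
    show "rev ps \<noteq> []" using ne by simp
    show "length (map Not (rev ds)) = length (rev ps) - 1" using l by simp
    fix p assume p: "p < length (map Not (rev ds))"
    define q where "q = length ps - 2 - p"
    have q: "q < length ds" using p l unfolding q_def by auto
    have sq: "Suc q = length ps - 1 - p" using p l unfolding q_def by simp
    have a: "rev ps ! p = ps ! Suc q" unfolding sq using p l by (simp add: rev_nth)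
    have b: "rev ps ! Suc p = ps ! q" using p l unfolding q_def by (auto simp: rev_nth Suc_diff_Suc)
    have c: "map Not (rev ds) ! p = (\<not> ds ! q)" using p l unfolding q_def by (auto simp: rev_nth)
    have "edge_at (rev ps) (map Not (rev ds)) p = edge_at ps ds q"
      unfolding edge_at_def a b c by auto
    then show "edge_at (rev ps) (map Not (rev ds)) p \<in> E" using e q by simp
  qed
qed

lemma conn_rev:
  assumes "conn E Ea C ps ds"
  shows "conn E Ea C (rev ps) (map Not (rev ds))"
proof -
  have w: "walk E ps ds" using assms unfolding conn_def by auto
  have l: "length ds = length ps - 1" using w unfolding walk_def by auto
  show ?thesis unfolding conn_def
  proof (intro conjI allI impI)
    show "walk E (rev ps) (map Not (rev ds))" using walk_rev[OF w] .
    fix p assume p: "0 < p \<and> p < length (rev ps) - 1"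
    define q where "q = length ps - 1 - p"
    have q: "0 < q" "q < length ps - 1" using p unfolding q_def by auto
    have a: "rev ps ! p = ps ! q" using p unfolding q_def by (auto simp: rev_nth)
    have c1: "map Not (rev ds) ! p = (\<not> ds ! (q - 1))" using p l unfolding q_def
      by (auto simp: rev_nth)
    have c2: "map Not (rev ds) ! (p - 1) = (\<not> ds ! q)" using p l unfolding q_def
      by (auto simp: rev_nth Suc_diff_Suc)
    have col: "collider_at (map Not (rev ds)) p = collider_at ds q"
      unfolding collider_at_def c1 c2 by auto
    have "open_at Ea C ps ds q" using assms q unfolding conn_def by auto
    then show "open_at Ea C (rev ps) (map Not (rev ds)) p"
      unfolding open_at_def col a .
  qed
qed

lemma edge_at_map:
  assumes "walk E ps ds" "p < length ds"
  shows "edge_at (map f ps) ds p = map_prod f f (edge_at ps ds p)"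
  using assms unfolding walk_def edge_at_def by auto

lemma walk_map:
  assumes "walk E ps ds" "\<forall>p<length ds. map_prod f f (edge_at ps ds p) \<in> F"
  shows "walk F (map f ps) ds"
  unfolding walk_def
proof (intro conjI allI impI)
  show "map f ps \<noteq> []" "length ds = length (map f ps) - 1" using assms(1) unfolding walk_def by auto
  fix p assume "p < length ds"
  then show "edge_at (map f ps) ds p \<in> F" using edge_at_map[OF assms(1)] assms(2) by metis
qed

lemma walk_nodes:
  assumes "walk E ps ds" "2 \<le> length ps" "E \<subseteq> Nd \<times> Nd" "p < length ps"
  shows "ps ! p \<in> Nd"
proof -
  have l: "length ds = length ps - 1" and e: "\<forall>k<length ds. edge_at ps ds k \<in> E"
    using assms(1) unfolding walk_def by auto
  show ?thesis
  proof (cases "p < length ds")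
    case True
    then have "edge_at ps ds p \<in> Nd \<times> Nd" using e assms(3) by auto
    then show ?thesis unfolding edge_at_def by (auto split: if_splits)
  next
    case False
    then have "p - 1 < length ds" "Suc (p - 1) = p" using l assms(2,4) by auto
    then have "edge_at ps ds (p - 1) \<in> Nd \<times> Nd" using e assms(3) by auto
    then show ?thesis unfolding edge_at_def using \<open>Suc (p - 1) = p\<close> by (auto split: if_splits)
  qed
qed

lemma walk_edge_fwd:
  assumes "walk E ps ds" "p < length ds" "ds ! p"
  shows "(ps ! p, ps ! Suc p) \<in> E"
  using assms unfolding walk_def edge_at_def by auto

lemma walk_edge_bwd:
  assumes "walk E ps ds" "p < length ds" "\<not> ds ! p"
  shows "(ps ! Suc p, ps ! p) \<in> E"
  using assms unfolding walk_def edge_at_def by auto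

lemma walk_out_edge:
  assumes "walk E ps ds" "0 < p" "p < length ps - 1" "\<not> collider_at ds p"
  shows "\<exists>y. (ps ! p, y) \<in> E"
proof -
  have l: "length ds = length ps - 1" and e: "\<forall>k<length ds. edge_at ps ds k \<in> E"
    using assms(1) unfolding walk_def by auto
  from assms(4) have "\<not> ds ! (p - 1) \<or> ds ! p" unfolding collider_at_def by auto
  then show ?thesis
  proof
    assume a: "\<not> ds ! (p - 1)"
    have "p - 1 < length ds" "Suc (p - 1) = p" using assms l by auto
    then have "(ps ! Suc (p - 1), ps ! (p - 1)) \<in> E" using walk_edge_bwd[OF assms(1)] a by blast
    then show ?thesis using \<open>Suc (p - 1) = p\<close> by auto
  next
    assume a: "ds ! p"
    have "p < length ds" using assms l by auto
    then show ?thesis using walk_edge_fwd[OF assms(1)] a by blast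
  qed
qed

lemma chain_exists:
  assumes "(x, z) \<in> E\<^sup>*" "z \<in> c"
  shows "\<exists>us. us \<noteq> [] \<and> hd us = x \<and> last us \<in> c \<and>
           (\<forall>a < length us - 1. (us ! a, us ! Suc a) \<in> E \<and> us ! a \<notin> c) \<and>
           (\<forall>a < length us. (us ! a, last us) \<in> E\<^sup>*)"
  using assms
proof (induction rule: converse_rtrancl_induct)
  case base
  then show ?case by (intro exI[of _ "[z]"]) auto
next
  case (step x y)
  then obtain us where us: "us \<noteq> []" "hd us = y" "last us \<in> c"
     "\<forall>a < length us - 1. (us ! a, us ! Suc a) \<in> E \<and> us ! a \<notin> c"
     "\<forall>a < length us. (us ! a, last us) \<in> E\<^sup>*" by blast
  show ?case
  proof (cases "x \<in> c")
    case True then show ?thesis by (intro exI[of _ "[x]"]) auto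
  next
    case False
    show ?thesis
    proof (intro exI[of _ "x # us"] conjI allI impI)
      show "x # us \<noteq> []" by simp
      show "hd (x # us) = x" by simp
      show "last (x # us) \<in> c" using us by simp
      fix a assume a: "a < length (x # us) - 1"
      show "((x # us) ! a, (x # us) ! Suc a) \<in> E"
      proof (cases a)
        case 0 then show ?thesis using step us by (simp add: hd_conv_nth)
      next
        case (Suc b) then show ?thesis using us a by auto
      qed
      show "(x # us) ! a \<notin> c"
        using False us a by (cases a) auto
    next
      fix a assume a: "a < length (x # us)"
      show "((x # us) ! a, last (x # us)) \<in> E\<^sup>*"
      proof (cases a)
        case 0
        have "us ! 0 = y" using us(1,2) by (simp add: hd_conv_nth)
        moreover have "0 < length us" using us(1) by simp
        ultimately have "(y, last us) \<in> E\<^sup>*" using us(5) by blast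
        then show ?thesis using 0 step us(1) by simp
      next
        case (Suc b) then show ?thesis using us a by auto
      qed
    qed
  qed
qed

lemma rtrancl_snd_mono:
  assumes "(x, y) \<in> E\<^sup>*" "\<forall>a b. (a, b) \<in> E \<longrightarrow> snd a \<le> (snd b :: nat)"
  shows "snd x \<le> snd y"
  using assms(1)
proof (induction rule: rtrancl_induct)
  case base then show ?case by simp
next
  case (step y z)
  then have "snd y \<le> snd z" using assms(2) by blast
  with step.IH show ?case by simp
qed

lemma rtrancl_proj:
  assumes "(x, y) \<in> E\<^sup>*" "\<forall>a b. (a, b) \<in> E \<longrightarrow> (fst a, fst b) \<in> Dm"
  shows "(fst x, fst y) \<in> Dm\<^sup>*"
  using assms(1)
proof (induction rule: rtrancl_induct)
  case base then show ?case by simp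
next
  case (step y z)
  then have "(fst y, fst z) \<in> Dm" using assms(2) by blast
  with step.IH show ?case by (rule rtrancl_into_rtrancl)
qed



lemma main_core:
  fixes E :: "(('i \<times> nat) \<times> ('i \<times> nat)) set" and Dm :: "('i \<times> 'i) set"
  assumes hE: "E \<subseteq> Nd \<times> Nd" and hNd: "\<forall>x\<in>Nd. snd x \<le> k"
    and htime: "\<forall>x y. (x, y) \<in> E \<longrightarrow> snd x \<le> snd y"
    and hcont: "\<forall>x y. (x, y) \<in> E \<longrightarrow> snd x = snd y \<longrightarrow> fst x = N \<and> (fst y = M \<or> fst y = C)"
    and hNM: "N \<noteq> M" "N \<noteq> C" and hk: "0 < k"
    and hproj: "\<forall>x y. (x, y) \<in> E \<longrightarrow> (fst x, fst y) \<in> Dm"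
    and hAT: "A \<noteq> T"
    and h1: "\<forall>x y. (x, y) \<in> E \<longrightarrow> x \<notin> c \<longrightarrow> fst x \<notin> CD"
    and h2: "\<forall>x\<in>c. fst x \<in> CD \<or> fst x = T"
    and h3: "\<forall>x\<in>Nd. fst x = T \<longrightarrow> x \<in> c \<or> x = (T, k)"
    and h4: "\<forall>x\<in>c. fst x = T \<longrightarrow> snd x < k"
    and h6: "\<forall>y. ((T, k), y) \<in> E \<longrightarrow> y \<notin> c"
    and hsep: "separated {e \<in> Dm. fst e \<noteq> T} Dm {A} {T} CD"
    and cn: "conn E E c ps ds" and dist: "distinct ps"
    and hd0: "hd ps = (A, 0)" and lst: "last ps = (T, k)"
  shows False
proof -
  define Ep where "Ep = {e \<in> Dm. fst e \<noteq> T}"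
  have w: "walk E ps ds" using cn unfolding conn_def by simp
  have ne: "ps \<noteq> []" and lds: "length ds = length ps - 1" using w unfolding walk_def by auto
  define L where "L = length ps"
  have L2: "2 \<le> L"
  proof (rule ccontr)
    assume "\<not> 2 \<le> L"
    moreover have "L \<noteq> 0" using ne L_def by simp
    ultimately have "L = 1" by arith
    then have "hd ps = last ps" using ne L_def by (cases ps) auto
    then show False using hd0 lst hAT by simp
  qed
  have p0: "ps ! 0 = (A, 0)" using hd0 ne by (simp add: hd_conv_nth)
  have pL: "ps ! (L - 1) = (T, k)" using lst ne L_def by (simp add: last_conv_nth)
  have nodes: "ps ! p \<in> Nd" if "p < L" for p using walk_nodes[OF w _ hE] that L2 L_def by simp
  have open_ps: "open_at E c ps ds p" if "0 < p" "p < L - 1" for p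
    using cn that L_def unfolding conn_def by simp
  have noout: "fst y = N" if "(y, z) \<in> E" "snd y = k" for y z
  proof -
    have "z \<in> Nd" using hE that by auto
    then have "snd z \<le> k" using hNd by auto
    moreover have "snd y \<le> snd z" using htime[rule_format, OF that(1)] .
    ultimately have "snd y = snd z" using that by simp
    then show ?thesis using hcont[rule_format, OF that(1)] by blast
  qed
  define j where "j = (LEAST j. fst (ps ! j) = T)"
  have exT: "fst (ps ! (L - 1)) = T" using pL by simp
  have jT: "fst (ps ! j) = T" unfolding j_def using LeastI[of "\<lambda>j. fst (ps ! j) = T", OF exT] .
  have jle: "j \<le> L - 1" unfolding j_def using Least_le[of "\<lambda>j. fst (ps ! j) = T", OF exT] .
  have jlt: "\<forall>p<j. fst (ps ! p) \<noteq> T" unfolding j_def using not_less_Least by blast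
  have j0: "0 < j" using jT p0 hAT by (cases "j = 0") auto
  have dsj: "ds ! (j - 1)"
  proof (rule ccontr)
    assume nd: "\<not> ds ! (j - 1)"
    have jd: "j - 1 < length ds" using jle j0 lds L_def by auto
    have bk: "(ps ! j, ps ! (j - 1)) \<in> E" using walk_edge_bwd[OF w jd nd] j0 by simp
    show False
    proof (cases "j = L - 1")
      case True
      then have pj: "ps ! j = (T, k)" using pL by simp
      define y where "y = ps ! (j - 1)"
      have ty: "((T, k), y) \<in> E" using bk pj y_def by simp
      have "k \<le> snd y" using htime[rule_format, OF ty] by simp
      moreover have "snd y \<le> k" using hNd nodes[of "j - 1"] jle y_def j0 by auto
      ultimately have sy: "snd y = k" by simp
      then have "T = N \<and> (fst y = M \<or> fst y = C)" using hcont[rule_format, OF ty] by simp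
      then have fy: "fst y \<noteq> N" using hNM by auto
      have j1: "j - 1 \<noteq> 0"
      proof
        assume "j - 1 = 0"
        then have "y = (A, 0)" using p0 y_def by simp
        then show False using sy hk by simp
      qed
      have int: "0 < j - 1" "j - 1 < L - 1" using j1 jle j0 by auto
      have "ds ! (j - 1 - 1)"
      proof (rule ccontr)
        assume "\<not> ds ! (j - 1 - 1)"
        moreover have "j - 1 - 1 < length ds" using int lds L_def by auto
        ultimately have "(ps ! Suc (j - 1 - 1), ps ! (j - 1 - 1)) \<in> E" using walk_edge_bwd[OF w] by blast
        moreover have "Suc (j - 1 - 1) = j - 1" using int by simp
        ultimately have "(y, ps ! (j - 1 - 1)) \<in> E" using y_def by simp
        then show False using noout sy fy by blast
      qed
      then have col: "collider_at ds (j - 1)" using nd unfolding collider_at_def by simp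
      then have "y \<in> ancestors E c" using open_ps[OF int] y_def unfolding open_at_def by simp
      then obtain z where z: "z \<in> c" "(y, z) \<in> E\<^sup>*" unfolding ancestors_def by auto
      show False
      proof (cases "y = z")
        case True then show False using h6[rule_format, OF ty] z by simp
      next
        case False
        then obtain w' where "(y, w') \<in> E" using z(2) by (metis converse_rtranclE)
        then show False using noout sy fy by blast
      qed
    next
      case False
      then have jl: "j < L - 1" using jle by simp
      have "ps ! j \<noteq> (T, k)"
      proof
        assume "ps ! j = (T, k)"
        then have "ps ! j = ps ! (L - 1)" using pL by simp
        then show False using dist jl L_def nth_eq_iff_index_eq[OF dist] L2 by auto
      qed
      moreover have "ps ! j \<in> Nd" using nodes[of j] jl by simp
      ultimately have "ps ! j \<in> c" using h3 jT by blast
      moreover have "\<not> collider_at ds j" using nd unfolding collider_at_def by simp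
      ultimately show False using open_ps[of j] j0 jl unfolding open_at_def by auto
    qed
  qed
  define bad where "bad p \<longleftrightarrow> 0 < p \<and> p < j \<and> collider_at ds p \<and> fst (ps ! p) \<notin> ancestors Dm CD" for p
  obtain i us where
    P1: "0 < i" "i \<le> j" "us \<noteq> []" "hd us = ps ! i" and
    P2: "\<forall>a < length us - 1. (us ! a, us ! Suc a) \<in> E" and
    P3: "\<forall>a < length us - 1. us ! a \<notin> c" and
    P4: "fst (last us) = T" and
    P5: "\<forall>a < length us - 1. fst (us ! a) \<noteq> T" and
    P6: "\<forall>p. 0 < p \<and> p < i \<and> collider_at ds p \<longrightarrow> fst (ps ! p) \<in> ancestors Dm CD" and
    P7: "i = j \<or> 2 \<le> length us"
  proof (cases "\<exists>p. bad p")
    case False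
    show ?thesis
    proof (rule that[of j "[ps ! j]"])
      show "\<forall>p. 0 < p \<and> p < j \<and> collider_at ds p \<longrightarrow> fst (ps ! p) \<in> ancestors Dm CD"
        using False unfolding bad_def by blast
    qed (use j0 jT in auto)
  next
    case True
    define i where "i = (LEAST p. bad p)"
    have bi: "bad i" unfolding i_def using True LeastI_ex by metis
    have bl: "\<not> bad p" if "p < i" for p using that not_less_Least unfolding i_def by blast
    have i0: "0 < i" "i < j" "collider_at ds i" "fst (ps ! i) \<notin> ancestors Dm CD"
      using bi unfolding bad_def by auto
    have "ps ! i \<in> ancestors E c" using open_ps[of i] i0 jle unfolding open_at_def by auto
    then obtain z where z: "z \<in> c" "(ps ! i, z) \<in> E\<^sup>*" unfolding ancestors_def by auto
    from chain_exists[OF z(2) z(1)] obtain us where us: "us \<noteq> []" "hd us = ps ! i" "last us \<in> c"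
      "\<forall>a < length us - 1. (us ! a, us ! Suc a) \<in> E \<and> us ! a \<notin> c"
      "\<forall>a < length us. (us ! a, last us) \<in> E\<^sup>*" by blast
    have u0: "us ! 0 = ps ! i" using us(1,2) by (simp add: hd_conv_nth)
    have reach0: "(ps ! i, last us) \<in> E\<^sup>*" using us(5) us(1) u0 by (metis length_greater_0_conv)
    have fl: "fst (last us) = T"
    proof (rule ccontr)
      assume "fst (last us) \<noteq> T"
      then have "fst (last us) \<in> CD" using h2 us(3) by auto
      moreover have "(fst (ps ! i), fst (last us)) \<in> Dm\<^sup>*" using rtrancl_proj[OF reach0] hproj by blast
      ultimately have "fst (ps ! i) \<in> ancestors Dm CD" unfolding ancestors_def by blast
      then show False using i0 by simp
    qed
    show ?thesis
    proof (rule that[of i us])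
      show "\<forall>a < length us - 1. (us ! a, us ! Suc a) \<in> E" using us(4) by blast
      show "\<forall>a < length us - 1. us ! a \<notin> c" using us(4) by blast
      show "\<forall>a < length us - 1. fst (us ! a) \<noteq> T"
      proof (intro allI impI)
        fix a assume a: "a < length us - 1"
        show "fst (us ! a) \<noteq> T"
        proof
          assume ft: "fst (us ! a) = T"
          have "us ! a \<in> Nd" using us(4) a hE by blast
          moreover have "us ! a \<notin> c" using us(4) a by blast
          ultimately have "us ! a = (T, k)" using h3 ft by blast
          moreover have "snd (us ! a) \<le> snd (last us)" using rtrancl_snd_mono[of "us ! a" "last us" E] us(5) a htime by simp
          moreover have "snd (last us) < k" using h4 us(3) fl by blast
          ultimately show False by simp
        qed
      qed
      show "\<forall>p. 0 < p \<and> p < i \<and> collider_at ds p \<longrightarrow> fst (ps ! p) \<in> ancestors Dm CD"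
        using bl i0 unfolding bad_def by auto
      show "i = j \<or> 2 \<le> length us"
      proof (rule ccontr)
        assume "\<not> (i = j \<or> 2 \<le> length us)"
        moreover have "length us \<noteq> 0" using us(1) by simp
        ultimately have "length us = 1" by arith
        then have "last us = us ! 0" using us(1) by (simp add: last_conv_nth)
        then have "last us = ps ! i" using u0 by simp
        then show False using fl jlt i0 by auto
      qed
    qed (use i0 us fl in auto)
  qed

  define m where "m = length us - 1"
  define ps2 where "ps2 = take i ps @ us"
  define ds2 where "ds2 = take i ds @ replicate m True"
  have iL: "i < L" using P1 jle L2 by auto
  have lu: "0 < length us" using P1(3) by simp
  have ij1: "i \<le> L - 1" using P1 jle by simp
  have len2: "length ps2 = i + length us" unfolding ps2_def using iL L_def by simp
  have ldsm: "length ds2 = i + m" unfolding ds2_def using ij1 lds L_def by simp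
  have lds2: "length ds2 = length ps2 - 1" using ldsm len2 lu unfolding m_def by arith
  have nth2: "ps2 ! p = (if p < i then ps ! p else us ! (p - i))" if "p < length ps2" for p
    using that iL L_def unfolding ps2_def by (simp add: nth_append)
  have dnth2: "ds2 ! p = (if p < i then ds ! p else True)" if "p < length ds2" for p
    using that iL L_def lds unfolding ds2_def ldsm by (simp add: nth_append)
  have u0: "us ! 0 = ps ! i" using P1 by (simp add: hd_conv_nth)
  have edges2: "edge_at ps2 ds2 p \<in> E \<and> fst (fst (edge_at ps2 ds2 p)) \<noteq> T" if p: "p < length ds2" for p
  proof (cases "p < i")
    case True
    have pd: "p < length ds" using True iL lds L_def by simp
    have a: "ps2 ! p = ps ! p" using nth2[of p] True p lds2 by simp
    have b: "ps2 ! Suc p = ps ! Suc p"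
    proof (cases "Suc p < i")
      case True then show ?thesis using nth2[of "Suc p"] p lds2 by simp
    next
      case False
      then have "Suc p = i" using \<open>p < i\<close> by simp
      then show ?thesis using nth2[of "Suc p"] p lds2 u0 by simp
    qed
    have c: "ds2 ! p = ds ! p" using dnth2[OF p] True by simp
    have e: "edge_at ps2 ds2 p = edge_at ps ds p" unfolding edge_at_def a b c ..
    have inE: "edge_at ps ds p \<in> E" using w pd unfolding walk_def by simp
    have src: "fst (fst (edge_at ps ds p)) \<noteq> T"
    proof (cases "ds ! p")
      case True
      then show ?thesis using jlt \<open>p < i\<close> P1 unfolding edge_at_def by simp
    next
      case False
      show ?thesis
      proof (cases "Suc p < j")
        case True then show ?thesis using jlt False unfolding edge_at_def by simp
      next
        case False
        then have "p = j - 1" using \<open>p < i\<close> P1 by simp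
        then show ?thesis using dsj \<open>\<not> ds ! p\<close> by simp
      qed
    qed
    show ?thesis using e inE src by simp
  next
    case False
    define a where "a = p - i"
    have am: "a < length us - 1" using p False ldsm unfolding a_def m_def by simp
    have x: "ps2 ! p = us ! a" using nth2[of p] False p lds2 unfolding a_def by simp
    have y: "ps2 ! Suc p = us ! Suc a" using nth2[of "Suc p"] False p lds2 unfolding a_def by (simp add: Suc_diff_le)
    have d: "ds2 ! p" using dnth2[OF p] False by simp
    have "edge_at ps2 ds2 p = (us ! a, us ! Suc a)" unfolding edge_at_def x y using d by simp
    then show ?thesis using P2 P5 am by simp
  qed
  have w2: "walk E ps2 ds2" unfolding walk_def using edges2 lds2 P1(3) unfolding ps2_def by simp
  define ps3 where "ps3 = map fst ps2"
  have w3: "walk Ep ps3 ds2" unfolding ps3_def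
  proof (rule walk_map[OF w2], intro allI impI)
    fix p assume p: "p < length ds2"
    obtain x y where xy: "edge_at ps2 ds2 p = (x, y)" by (cases "edge_at ps2 ds2 p") blast
    have xyE: "(x, y) \<in> E" "fst x \<noteq> T" using edges2[OF p] xy by auto
    have "(fst x, fst y) \<in> Dm" using hproj[rule_format, OF xyE(1)] .
    then show "map_prod fst fst (edge_at ps2 ds2 p) \<in> Ep" using xy xyE(2) unfolding Ep_def by simp
  qed
  have c3: "conn Ep Dm CD ps3 ds2" unfolding conn_def
  proof (intro conjI allI impI)
    show "walk Ep ps3 ds2" by (rule w3)
    fix p assume p: "0 < p \<and> p < length ps3 - 1"
    have pl: "p < length ps2 - 1" using p unfolding ps3_def by simp
    have pd: "p < length ds2" "p - 1 < length ds2" using pl lds2 by auto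
    have col2: "collider_at ds2 p = (p < i \<and> collider_at ds p)"
      unfolding collider_at_def using dnth2[OF pd(1)] dnth2[OF pd(2)] by auto
    have n3: "ps3 ! p = fst (ps2 ! p)" using pl unfolding ps3_def by simp
    show "open_at Dm CD ps3 ds2 p" unfolding open_at_def
    proof (intro conjI impI)
      assume "collider_at ds2 p"
      then have "p < i" "collider_at ds p" using col2 by auto
      then show "ps3 ! p \<in> ancestors Dm CD" using P6 p n3 nth2[of p] pl by simp
    next
      assume nc: "\<not> collider_at ds2 p"
      obtain y where y: "(ps2 ! p, y) \<in> E" using walk_out_edge[OF w2 _ pl nc] p by blast
      have "ps2 ! p \<notin> c"
      proof (cases "p < i")
        case True
        then have "\<not> collider_at ds p" using col2 nc by simp
        moreover have "p < L - 1" using True ij1 by simp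
        ultimately have "ps ! p \<notin> c" using open_ps[of p] p unfolding open_at_def by simp
        then show ?thesis using nth2[of p] pl True by simp
      next
        case False
        have "p - i < length us - 1" using pl len2 False by simp
        then show ?thesis using nth2[of p] pl False P3 by simp
      qed
      then show "ps3 ! p \<notin> CD" using h1[rule_format, OF y] n3 by simp
    qed
  qed
  have hd3: "hd ps3 = A"
  proof -
    have "hd ps3 = ps3 ! 0" using w3 unfolding walk_def by (simp add: hd_conv_nth)
    also have "\<dots> = fst (ps2 ! 0)" using len2 P1 unfolding ps3_def by simp
    also have "\<dots> = fst (ps ! 0)" using nth2[of 0] len2 P1 by simp
    finally show ?thesis using p0 by simp
  qed
  have last3: "last ps3 = T"
  proof -
    have "last ps2 = last us" unfolding ps2_def using P1 by simp
    then show ?thesis unfolding ps3_def using P4 P1 len2 by (simp add: last_map ps2_def)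
  qed
  have "Ep \<subseteq> Dm" unfolding Ep_def by auto
  from walk_to_path[OF c3 this] obtain ps' ds' where
    r: "conn Ep Dm CD ps' ds'" "distinct ps'" "hd ps' = hd ps3" "last ps' = last ps3" by blast
  then show False using hsep hd3 last3 unfolding separated_conn Ep_def by blast
qed



lemma main_dsep:
  fixes E :: "(('i \<times> nat) \<times> ('i \<times> nat)) set" and Dm :: "('i \<times> 'i) set"
  assumes hE: "E \<subseteq> Nd \<times> Nd" and hNd: "\<forall>x\<in>Nd. snd x \<le> k"
    and htime: "\<forall>x y. (x, y) \<in> E \<longrightarrow> snd x \<le> snd y"
    and hcont: "\<forall>x y. (x, y) \<in> E \<longrightarrow> snd x = snd y \<longrightarrow> fst x = N \<and> (fst y = M \<or> fst y = C)"
    and hNM: "N \<noteq> M" "N \<noteq> C" and hk: "0 < k"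
    and hproj: "\<forall>x y. (x, y) \<in> E \<longrightarrow> (fst x, fst y) \<in> Dm"
    and hAT: "A \<noteq> T"
    and h1: "\<forall>x y. (x, y) \<in> E \<longrightarrow> x \<notin> c \<longrightarrow> fst x \<notin> CD"
    and h2: "\<forall>x\<in>c. fst x \<in> CD \<or> fst x = T"
    and h3: "\<forall>x\<in>Nd. fst x = T \<longrightarrow> x \<in> c \<or> x = (T, k)"
    and h4: "\<forall>x\<in>c. fst x = T \<longrightarrow> snd x < k"
    and h6: "\<forall>y. ((T, k), y) \<in> E \<longrightarrow> y \<notin> c"
    and hsep: "separated {e \<in> Dm. fst e \<noteq> T} Dm {A} {T} CD"
  shows "d_separated E {(A, 0)} {(T, k)} c"
  unfolding d_separated_def separated_conn
proof
  assume "\<exists>ps ds. conn E E c ps ds \<and> distinct ps \<and>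
      (hd ps \<in> {(A, 0)} \<and> last ps \<in> {(T, k)} \<or> hd ps \<in> {(T, k)} \<and> last ps \<in> {(A, 0)})"
  then obtain ps ds where cn: "conn E E c ps ds" "distinct ps"
    and ends: "hd ps = (A, 0) \<and> last ps = (T, k) \<or> hd ps = (T, k) \<and> last ps = (A, 0)" by auto
  have ne: "ps \<noteq> []" using cn unfolding conn_def walk_def by auto
  note mc = main_core[OF hE hNd htime hcont hNM hk hproj hAT h1 h2 h3 h4 h6 hsep]
  from ends show False
  proof
    assume "hd ps = (A, 0) \<and> last ps = (T, k)"
    then show False using mc cn by blast
  next
    assume e: "hd ps = (T, k) \<and> last ps = (A, 0)"
    have "conn E E c (rev ps) (map Not (rev ds))" using conn_rev[OF cn(1)] .
    moreover have "distinct (rev ps)" using cn(2) by simp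
    moreover have "hd (rev ps) = (A, 0)" "last (rev ps) = (T, k)" using e ne by (auto simp: hd_rev last_rev)
    ultimately show False using mc by blast
  qed
qed

theorem proposition2:
  fixes Pr :: "'a measure"
    and X :: "'i \<times> nat \<Rightarrow> 'a \<Rightarrow> 'b"
    and Sp :: "'i \<times> nat \<Rightarrow> 'b measure"
    and V W :: "'i set"
    and N M C AD AM :: 'i
    and E :: "nat \<Rightarrow> (('i \<times> nat) \<times> ('i \<times> nat)) set"
    and k :: nat
  assumes "prob_space Pr"
    and "finite V" "finite W" "V \<inter> W = {}"
    and "N \<in> V" "M \<in> V" "C \<in> V" "N \<noteq> M" "N \<noteq> C" "M \<noteq> C"
    and "AD \<in> W" "AM \<in> W" "AD \<noteq> AM"
    and meas: "\<And>n. n \<in> (\<Union>t. unrolled_nodes V W t) \<Longrightarrow> X n \<in> Pr \<rightarrow>\<^sub>M Sp n"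
    and dag: "\<And>t. t \<ge> 1 \<Longrightarrow> is_dag_on (unrolled_nodes V W t) (E t)"
    and time_order: "\<And>t i s j u. t \<ge> 1 \<Longrightarrow> ((i, s), (j, u)) \<in> E t \<Longrightarrow> s \<le> u"
    and standing: "\<And>t i j u. t \<ge> 1 \<Longrightarrow> ((i, u), (j, u)) \<in> E t \<Longrightarrow>
                     \<exists>s r. s < r \<and> ((i, s), (j, r)) \<in> E t"
    and markov: "\<And>t a b c. t \<ge> 1 \<Longrightarrow> a \<subseteq> unrolled_nodes V W t \<Longrightarrow>
                   b \<subseteq> unrolled_nodes V W t \<Longrightarrow> c \<subseteq> unrolled_nodes V W t \<Longrightarrow>
                   d_separated (E t) a b c \<Longrightarrow> cond_indep Pr X Sp a b c"
    and contemp: "\<And>t i j s. t \<ge> 1 \<Longrightarrow> ((i, s), (j, s)) \<in> E t \<Longrightarrow>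
                   i = N \<and> (j = M \<or> j = C)"
    and "k \<ge> 1"
  shows
    "(delta_separated (\<Union>t\<in>{1..}. rolled_plain (E t)) (\<Union>t\<in>{1..}. rolled_tailed (E t))
        {M} {AD} {AM, C, N} \<longrightarrow>
      cond_indep Pr X Sp {(AD, 0)} {(M, k)}
        ({(AM, 0)} \<union> {(M, s) | s. s \<le> k - 1} \<union> {(C, s) | s. s \<le> k - 1} \<union> {(N, s) | s. s \<le> k}))
   \<and> (delta_separated (\<Union>t\<in>{1..}. rolled_plain (E t)) (\<Union>t\<in>{1..}. rolled_tailed (E t))
        {C} {AM} {AD, M, N} \<longrightarrow>
      cond_indep Pr X Sp {(AM, 0)} {(C, k)}
        ({(AD, 0)} \<union> {(M, s) | s. s \<le> k} \<union> {(C, s) | s. s \<le> k - 1} \<union> {(N, s) | s. s \<le> k}))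
   \<and> (delta_separated (\<Union>t\<in>{1..}. rolled_plain (E t)) (\<Union>t\<in>{1..}. rolled_tailed (E t))
        {N} {AM} {AD, C, M} \<longrightarrow>
      cond_indep Pr X Sp {(AM, 0)} {(N, k)}
        ({(AD, 0)} \<union> {(M, s) | s. s \<le> k - 1} \<union> {(C, s) | s. s \<le> k - 1} \<union> {(N, s) | s. s \<le> k - 1}))"
proof -
  have hk1: "1 \<le> k" by fact
  define Nd where "Nd = unrolled_nodes V W k"
  define Dm where "Dm = minus_graph (\<Union>t\<in>{1..}. rolled_plain (E t)) (\<Union>t\<in>{1..}. rolled_tailed (E t))"
  have VW: "V \<inter> W = {}" by fact
  have dist: "AD \<noteq> M" "AD \<noteq> C" "AD \<noteq> N" "AM \<noteq> M" "AM \<noteq> C" "AM \<noteq> N"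
    using VW \<open>AD \<in> W\<close> \<open>AM \<in> W\<close> \<open>M \<in> V\<close> \<open>C \<in> V\<close> \<open>N \<in> V\<close> by auto
  have hE: "E k \<subseteq> Nd \<times> Nd" using dag[OF hk1] unfolding is_dag_on_def Nd_def by simp
  have hNd: "\<forall>x\<in>Nd. snd x \<le> k" unfolding Nd_def unrolled_nodes_def by auto
  have ndV: "fst x \<in> V \<and> snd x \<le> k \<or> fst x \<in> W \<and> snd x = 0" if "x \<in> Nd" for x
    using that unfolding Nd_def unrolled_nodes_def by auto
  have ndW: "snd x = 0" if "x \<in> Nd" "fst x \<in> W" for x
    using ndV[OF that(1)] that(2) VW by auto
  have htime: "\<forall>x y. (x, y) \<in> E k \<longrightarrow> snd x \<le> snd y"
  proof (intro allI impI)
    fix x y assume "(x, y) \<in> E k"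
    then show "snd x \<le> snd y" using time_order[OF hk1] by (cases x, cases y) simp
  qed
  have hcont: "\<forall>x y. (x, y) \<in> E k \<longrightarrow> snd x = snd y \<longrightarrow> fst x = N \<and> (fst y = M \<or> fst y = C)"
  proof (intro allI impI)
    fix x y assume "(x, y) \<in> E k" "snd x = snd y"
    then show "fst x = N \<and> (fst y = M \<or> fst y = C)"
      using contemp[OF hk1] by (cases x, cases y) simp
  qed
  have hproj: "\<forall>x y. (x, y) \<in> E k \<longrightarrow> (fst x, fst y) \<in> Dm"
  proof (intro allI impI)
    fix x y assume xy: "(x, y) \<in> E k"
    obtain i s where x: "x = (i, s)" by (cases x)
    obtain j u where y: "y = (j, u)" by (cases y)
    have su: "s \<le> u" using htime xy x y by auto
    have k1: "k \<in> {1..}" using hk1 by simp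
    show "(fst x, fst y) \<in> Dm"
    proof (cases "(i, j) \<in> rolled_tailed (E k)")
      case True then show ?thesis unfolding Dm_def minus_graph_def x y using k1 by auto
    next
      case False
      then have "(i, j) \<in> rolled_plain (E k)" unfolding rolled_plain_def using xy x y su by blast
      then show ?thesis unfolding Dm_def minus_graph_def x y using k1 by auto
    qed
  qed
  have noout: "fst x = N" if "(x, y) \<in> E k" "snd x = k" for x y
  proof -
    have "y \<in> Nd" using hE that by auto
    then have "snd y \<le> k" using hNd by auto
    moreover have "snd x \<le> snd y" using htime that by blast
    ultimately have "snd x = snd y" using that by simp
    then show ?thesis using hcont[rule_format, OF that(1)] by blast
  qed
  have xNd: "x \<in> Nd" if "(x, y) \<in> E k" for x y using hE that by auto
  have hk: "0 < k" using hk1 by simp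
  have NM: "N \<noteq> M" "N \<noteq> C" by fact+
  have sepeq: "\<And>T. {e \<in> Dm. fst e \<notin> {T}} = {e \<in> Dm. fst e \<noteq> T}" by auto
  note md = main_dsep[OF hE hNd htime hcont NM hk hproj]
  have mk: "cond_indep Pr X Sp a b c" if "a \<subseteq> Nd" "b \<subseteq> Nd" "c \<subseteq> Nd" "d_separated (E k) a b c" for a b c
    using markov[OF hk1] that unfolding Nd_def by blast
  have inNd: "(i, s) \<in> Nd" if "i \<in> V" "s \<le> k" for i s using that unfolding Nd_def unrolled_nodes_def by auto
  have inNdW: "(i, 0) \<in> Nd" if "i \<in> W" for i using that unfolding Nd_def unrolled_nodes_def by auto
  show ?thesis
  proof (intro conjI impI)
    assume ds: "delta_separated (\<Union>t\<in>{1..}. rolled_plain (E t)) (\<Union>t\<in>{1..}. rolled_tailed (E t))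
        {M} {AD} {AM, C, N}"
    define c where "c = {(AM, 0)} \<union> {(M, s) | s. s \<le> k - 1} \<union> {(C, s) | s. s \<le> k - 1} \<union> {(N, s) | s. s \<le> k}"
    have "d_separated (E k) {(AD, 0)} {(M, k)} c"
    proof (rule md)
      show "AD \<noteq> M" by (rule dist)
      show "\<forall>x y. (x, y) \<in> E k \<longrightarrow> x \<notin> c \<longrightarrow> fst x \<notin> {AM, C, N}"
      proof (intro allI impI)
        fix x y assume xy: "(x, y) \<in> E k" and xc: "x \<notin> c"
        obtain i s where x: "x = (i, s)" by (cases x)
        have nd: "x \<in> Nd" using xNd xy .
        show "fst x \<notin> {AM, C, N}"
        proof
          assume "fst x \<in> {AM, C, N}"
          then consider "i = AM" | "i = C" | "i = N" using x by auto
          then show False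
          proof cases
            case 1 then have "s = 0" using ndW[OF nd] x \<open>AM \<in> W\<close> by simp
            then show False using xc x 1 unfolding c_def by simp
          next
            case 2
            have "s \<le> k" using hNd nd x by auto
            show False
            proof (cases "s = k")
              case True then show False using noout[OF xy] x 2 NM by simp
            next
              case False then show False using xc x 2 \<open>s \<le> k\<close> unfolding c_def by auto
            qed
          next
            case 3
            have "s \<le> k" using hNd nd x by auto
            then show False using xc x 3 unfolding c_def by auto
          qed
        qed
      qed
      show "\<forall>x\<in>c. fst x \<in> {AM, C, N} \<or> fst x = M" unfolding c_def by auto
      show "\<forall>x\<in>Nd. fst x = M \<longrightarrow> x \<in> c \<or> x = (M, k)"
        using hNd unfolding c_def by fastforce
      show "\<forall>x\<in>c. fst x = M \<longrightarrow> snd x < k" using dist hk NM unfolding c_def by auto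
      show "\<forall>y. ((M, k), y) \<in> E k \<longrightarrow> y \<notin> c" using noout NM by fastforce
      show "separated {e \<in> Dm. fst e \<noteq> M} Dm {AD} {M} {AM, C, N}"
        using ds unfolding delta_separated_def Dm_def by simp
    qed
    moreover have "c \<subseteq> Nd" unfolding c_def using inNd inNdW \<open>AM \<in> W\<close> \<open>M \<in> V\<close> \<open>C \<in> V\<close> \<open>N \<in> V\<close> by auto
    ultimately show "cond_indep Pr X Sp {(AD, 0)} {(M, k)}
        ({(AM, 0)} \<union> {(M, s) | s. s \<le> k - 1} \<union> {(C, s) | s. s \<le> k - 1} \<union> {(N, s) | s. s \<le> k})"
      using mk inNd inNdW \<open>AD \<in> W\<close> \<open>M \<in> V\<close> unfolding c_def by auto
  next
    assume ds: "delta_separated (\<Union>t\<in>{1..}. rolled_plain (E t)) (\<Union>t\<in>{1..}. rolled_tailed (E t))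
        {C} {AM} {AD, M, N}"
    define c where "c = {(AD, 0)} \<union> {(M, s) | s. s \<le> k} \<union> {(C, s) | s. s \<le> k - 1} \<union> {(N, s) | s. s \<le> k}"
    have "d_separated (E k) {(AM, 0)} {(C, k)} c"
    proof (rule md)
      show "AM \<noteq> C" by (rule dist)
      show "\<forall>x y. (x, y) \<in> E k \<longrightarrow> x \<notin> c \<longrightarrow> fst x \<notin> {AD, M, N}"
      proof (intro allI impI)
        fix x y assume xy: "(x, y) \<in> E k" and xc: "x \<notin> c"
        obtain i s where x: "x = (i, s)" by (cases x)
        have nd: "x \<in> Nd" using xNd xy .
        have sk: "s \<le> k" using hNd nd x by auto
        show "fst x \<notin> {AD, M, N}"
        proof
          assume "fst x \<in> {AD, M, N}"
          then consider "i = AD" | "i = M" | "i = N" using x by auto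
          then show False
          proof cases
            case 1 then have "s = 0" using ndW[OF nd] x \<open>AD \<in> W\<close> by simp
            then show False using xc x 1 unfolding c_def by simp
          next
            case 2 then show False using xc x sk unfolding c_def by auto
          next
            case 3 then show False using xc x sk unfolding c_def by auto
          qed
        qed
      qed
      show "\<forall>x\<in>c. fst x \<in> {AD, M, N} \<or> fst x = C" unfolding c_def by auto
      show "\<forall>x\<in>Nd. fst x = C \<longrightarrow> x \<in> c \<or> x = (C, k)"
        using hNd unfolding c_def by fastforce
      show "\<forall>x\<in>c. fst x = C \<longrightarrow> snd x < k" using dist hk NM \<open>M \<noteq> C\<close> unfolding c_def by auto
      show "\<forall>y. ((C, k), y) \<in> E k \<longrightarrow> y \<notin> c" using noout NM by fastforce
      show "separated {e \<in> Dm. fst e \<noteq> C} Dm {AM} {C} {AD, M, N}"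
        using ds unfolding delta_separated_def Dm_def by simp
    qed
    moreover have "c \<subseteq> Nd" unfolding c_def using inNd inNdW \<open>AD \<in> W\<close> \<open>M \<in> V\<close> \<open>C \<in> V\<close> \<open>N \<in> V\<close> by auto
    ultimately show "cond_indep Pr X Sp {(AM, 0)} {(C, k)}
        ({(AD, 0)} \<union> {(M, s) | s. s \<le> k} \<union> {(C, s) | s. s \<le> k - 1} \<union> {(N, s) | s. s \<le> k})"
      using mk inNd inNdW \<open>AM \<in> W\<close> \<open>C \<in> V\<close> unfolding c_def by auto
  next
    assume ds: "delta_separated (\<Union>t\<in>{1..}. rolled_plain (E t)) (\<Union>t\<in>{1..}. rolled_tailed (E t))
        {N} {AM} {AD, C, M}"
    define c where "c = {(AD, 0)} \<union> {(M, s) | s. s \<le> k - 1} \<union> {(C, s) | s. s \<le> k - 1} \<union> {(N, s) | s. s \<le> k - 1}"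
    have "d_separated (E k) {(AM, 0)} {(N, k)} c"
    proof (rule md)
      show "AM \<noteq> N" by (rule dist)
      show "\<forall>x y. (x, y) \<in> E k \<longrightarrow> x \<notin> c \<longrightarrow> fst x \<notin> {AD, C, M}"
      proof (intro allI impI)
        fix x y assume xy: "(x, y) \<in> E k" and xc: "x \<notin> c"
        obtain i s where x: "x = (i, s)" by (cases x)
        have nd: "x \<in> Nd" using xNd xy .
        have sk: "s \<le> k" using hNd nd x by auto
        show "fst x \<notin> {AD, C, M}"
        proof
          assume "fst x \<in> {AD, C, M}"
          then consider "i = AD" | "i = C" | "i = M" using x by auto
          then show False
          proof cases
            case 1 then have "s = 0" using ndW[OF nd] x \<open>AD \<in> W\<close> by simp
            then show False using xc x 1 unfolding c_def by simp
          next
            case 2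
            show False
            proof (cases "s = k")
              case True then show False using noout[OF xy] x 2 NM by simp
            next
              case False then show False using xc x 2 sk unfolding c_def by auto
            qed
          next
            case 3
            show False
            proof (cases "s = k")
              case True then show False using noout[OF xy] x 3 NM by simp
            next
              case False then show False using xc x 3 sk unfolding c_def by auto
            qed
          qed
        qed
      qed
      show "\<forall>x\<in>c. fst x \<in> {AD, C, M} \<or> fst x = N" unfolding c_def by auto
      show "\<forall>x\<in>Nd. fst x = N \<longrightarrow> x \<in> c \<or> x = (N, k)"
        using hNd unfolding c_def by fastforce
      show "\<forall>x\<in>c. fst x = N \<longrightarrow> snd x < k" using dist hk NM unfolding c_def by auto
      show "\<forall>y. ((N, k), y) \<in> E k \<longrightarrow> y \<notin> c"
      proof (intro allI impI)
        fix y assume y: "((N, k), y) \<in> E k"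
        have "k \<le> snd y" using htime y by fastforce
        moreover have "snd y \<le> k" using hE hNd y by auto
        ultimately show "y \<notin> c" unfolding c_def using hk by auto
      qed
      show "separated {e \<in> Dm. fst e \<noteq> N} Dm {AM} {N} {AD, C, M}"
        using ds unfolding delta_separated_def Dm_def by simp
    qed
    moreover have "c \<subseteq> Nd" unfolding c_def using inNd inNdW \<open>AD \<in> W\<close> \<open>M \<in> V\<close> \<open>C \<in> V\<close> \<open>N \<in> V\<close> by auto
    ultimately show "cond_indep Pr X Sp {(AM, 0)} {(N, k)}
        ({(AD, 0)} \<union> {(M, s) | s. s \<le> k - 1} \<union> {(C, s) | s. s \<le> k - 1} \<union> {(N, s) | s. s \<le> k - 1})"
      using mk inNd inNdW \<open>AM \<in> W\<close> \<open>N \<in> V\<close> unfolding c_def by auto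
  qed
qed


end
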